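(* Let $\alpha$ be an admissible anisotropy. There exists $C>0$ such that for every $j\ge0$ and every $f\in\mathcal S'(\mathbb R^2)$ whose Fourier transform $\hat f$ is a locally square-integrable function, \[C^{-1}\sum_{(j_1,j_2)\in\Gamma_j(\alpha)}\|\phi_{j_1,j_2}\hat f\|_{L^2}^2\le\|g_j^\alpha\hat f\|_{L^2}^2\le C\sum_{(j_1,j_2)\in\Gamma_j(\alpha)}\|\phi_{j_1,j_2}\hat f\|_{L^2}^2,\] where $g_j^\alpha=\sum_{(j_1,j_2)\in\Gamma_j(\alpha)}\phi_{j_1,j_2}$.
   Context: $\mathbb N=\{0,1,2,\dots\}$, $[x]$ integer part. Admissible anisotropy: $\alpha_i\ge0$, $\alpha_1+\alpha_2=2$. Hyperbolic resolution of unity: $\theta_0\in\mathcal S(\mathbb R)$, $\theta_0\ge0$, supported in $[-2,2]$, $=1$ on $[-1,1]$; $\theta_j(t)=\theta_0(2^{-j}t)-\theta_0(2^{-(j-1)}t)$ ($j\ge1$), assumed nonnegative; $\phi_{j_1,j_2}(\xi)=\theta_{j_1}(\xi_1)\theta_{j_2}(\xi_2)$. $\Gamma_j(\alpha)=\Gamma_j^{HL}\cup\Gamma_j^{LH}\cup\Gamma_j^{HH}$ with $\Gamma_j^{HL}=\{(j_1,j_2)\in\mathbb N^2:[(j-1)\alpha_1]-1\le j_1\le[j\alpha_1]+1,\ 0\le j_2\le[(j-1)\alpha_2]-1\}$, $\Gamma_j^{LH}=\{(j_1,j_2)\in\mathbb N^2:0\le j_1\le[(j-1)\alpha_1]-1,\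 [(j-1)\alpha_2]-1\le j_2\le[j\alpha_2]+1\}$, $\Gamma_j^{HH}=\{(j_1,j_2)\in\mathbb N^2:[(j-1)\alpha_1]-1\le j_1\le[j\alpha_1]+1,\ [(j-1)\alpha_2]-1\le j_2\le[j\alpha_2]+1\}$. *)

theory Defs
  imports "HOL-Analysis.Analysis"
begin

definition schwartz :: "(real \<Rightarrow> real) \<Rightarrow> bool" where
  "schwartz f \<longleftrightarrow>
     (\<forall>k x. ((deriv ^^ k) f) differentiable (at x)) \<and>
     (\<forall>k n. bounded (range (\<lambda>x. \<bar>x\<bar> ^ n * (deriv ^^ k) f x)))"

definition theta :: "(real \<Rightarrow> real) \<Rightarrow> nat \<Rightarrow> real \<Rightarrow> real" where
  "theta \<theta>0 j t = (if j = 0 then \<theta>0 t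
                   else \<theta>0 (t / 2 ^ j) - \<theta>0 (t / 2 ^ (j - 1)))"

definition phi :: "(real \<Rightarrow> real) \<Rightarrow> nat \<Rightarrow> nat \<Rightarrow> real \<times> real \<Rightarrow> real" where
  "phi \<theta>0 j1 j2 \<xi> = theta \<theta>0 j1 (fst \<xi>) * theta \<theta>0 j2 (snd \<xi>)"

definition admissible :: "real \<Rightarrow> real \<Rightarrow> bool" where
  "admissible a1 a2 \<longleftrightarrow> a1 \<ge> 0 \<and> a2 \<ge> 0 \<and> a1 + a2 = 2"

definition GammaHL :: "real \<Rightarrow> real \<Rightarrow> nat \<Rightarrow> (nat \<times> nat) set" where
  "GammaHL a1 a2 j = {(j1, j2). \<lfloor>(real j - 1) * a1\<rfloor> - 1 \<le> int j1 \<and> int j1 \<le> \<lfloor>real j * a1\<rfloor> + 1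
                       \<and> int j2 \<le> \<lfloor>(real j - 1) * a2\<rfloor> - 1}"

definition GammaLH :: "real \<Rightarrow> real \<Rightarrow> nat \<Rightarrow> (nat \<times> nat) set" where
  "GammaLH a1 a2 j = {(j1, j2). int j1 \<le> \<lfloor>(real j - 1) * a1\<rfloor> - 1
                       \<and> \<lfloor>(real j - 1) * a2\<rfloor> - 1 \<le> int j2 \<and> int j2 \<le> \<lfloor>real j * a2\<rfloor> + 1}"

definition GammaHH :: "real \<Rightarrow> real \<Rightarrow> nat \<Rightarrow> (nat \<times> nat) set" where
  "GammaHH a1 a2 j = {(j1, j2). \<lfloor>(real j - 1) * a1\<rfloor> - 1 \<le> int j1 \<and> int j1 \<le> \<lfloor>real j * a1\<rfloor> + 1
                       \<and> \<lfloor>(real j - 1) * a2\<rfloor> - 1 \<le> int j2 \<and> int j2 \<le> \<lfloor>real j * a2\<rfloor> + 1}"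

definition Gamma :: "real \<Rightarrow> real \<Rightarrow> nat \<Rightarrow> (nat \<times> nat) set" where
  "Gamma a1 a2 j = GammaHL a1 a2 j \<union> GammaLH a1 a2 j \<union> GammaHH a1 a2 j"

definition g_alpha :: "(real \<Rightarrow> real) \<Rightarrow> real \<Rightarrow> real \<Rightarrow> nat \<Rightarrow> real \<times> real \<Rightarrow> real" where
  "g_alpha \<theta>0 a1 a2 j \<xi> = (\<Sum>(j1, j2)\<in>Gamma a1 a2 j. phi \<theta>0 j1 j2 \<xi>)"

text \<open>Squared L2 norm of a (possibly not square integrable) function, as an
extended nonnegative real.\<close>
definition L2sq :: "(real \<times> real \<Rightarrow> complex) \<Rightarrow> ennreal" where
  "L2sq h = (\<integral>\<^sup>+ x. ennreal ((cmod (h x))\<^sup>2) \<partial>lborel)"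

definition locally_L2 :: "(real \<times> real \<Rightarrow> complex) \<Rightarrow> bool" where
  "locally_L2 F \<longleftrightarrow> F \<in> borel_measurable lborel \<and>
     (\<forall>K. compact K \<longrightarrow> set_integrable lborel K (\<lambda>x. (cmod (F x))\<^sup>2))"

end

theory Submission
  imports Defs
begin

lemma theta_nz:
  assumes h3: "\<And>t. \<bar>t\<bar> > 2 \<Longrightarrow> \<theta>0 t = 0"
    and h4: "\<And>t. \<bar>t\<bar> \<le> 1 \<Longrightarrow> \<theta>0 t = 1"
    and nz: "theta \<theta>0 j t \<noteq> 0"
  shows "(j = 0 \<and> \<bar>t\<bar> \<le> 2) \<or> (j \<ge> 1 \<and> (2::real)^(j-1) < \<bar>t\<bar> \<and> \<bar>t\<bar> \<le> 2^(j+1))"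
proof (cases "j = 0")
  case True
  then show ?thesis using nz h3 by (force simp: theta_def)
next
  case False
  have p1: "(2::real)^j = 2 * 2^(j-1)" using False by (metis Suc_pred' gr0I power_Suc)
  have p2: "(2::real)^(j+1) = 2 * 2^j" by simp
  have "\<not> \<bar>t\<bar> \<le> 2^(j-1)"
  proof
    assume a: "\<bar>t\<bar> \<le> 2^(j-1)"
    have "\<bar>t / 2^j\<bar> \<le> 1" using a p1 by (simp add: abs_divide divide_le_eq)
    moreover have "\<bar>t / 2^(j-1)\<bar> \<le> 1" using a by (simp add: abs_divide divide_le_eq)
    ultimately show False using nz False h4 by (simp add: theta_def)
  qed
  moreover have "\<not> \<bar>t\<bar> > 2^(j+1)"
  proof
    assume a: "\<bar>t\<bar> > 2^(j+1)"
    have "\<bar>t / 2^j\<bar> > 2" using a p2 by (simp add: abs_divide less_divide_eq)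
    moreover have "\<bar>t / 2^(j-1)\<bar> > 2" using a p1 p2 by (simp add: abs_divide less_divide_eq)
    ultimately show False using nz False h3 by (simp add: theta_def)
  qed
  ultimately show ?thesis using False by auto
qed

lemma theta_nz_close:
  assumes h3: "\<And>t. \<bar>t\<bar> > 2 \<Longrightarrow> \<theta>0 t = 0"
    and h4: "\<And>t. \<bar>t\<bar> \<le> 1 \<Longrightarrow> \<theta>0 t = 1"
    and nz1: "theta \<theta>0 j t \<noteq> 0" and nz2: "theta \<theta>0 k t \<noteq> 0" and jk: "j < k"
  shows "k \<le> j + 1"
proof (rule ccontr)
  assume "\<not> k \<le> j + 1"
  then have kk: "j + 1 \<le> k - 1" by simp
  have "(2::real)^(j+1) \<le> 2^(k-1)" by (rule power_increasing[OF kk]) simp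
  moreover have "(2::real) \<le> 2^(k-1)" using kk
    by (metis One_nat_def le_add2 le_trans power_increasing power_one_right one_le_numeral)
  ultimately show False
    using theta_nz[OF h3 h4 nz1] theta_nz[OF h3 h4 nz2] jk by auto
qed

lemma theta_nz_set:
  assumes h3: "\<And>t. \<bar>t\<bar> > 2 \<Longrightarrow> \<theta>0 t = 0"
    and h4: "\<And>t. \<bar>t\<bar> \<le> 1 \<Longrightarrow> \<theta>0 t = 1"
  shows "finite {j. theta \<theta>0 j t \<noteq> 0} \<and> card {j. theta \<theta>0 j t \<noteq> 0} \<le> 2"
proof (cases "{j. theta \<theta>0 j t \<noteq> 0} = {}")
  case True then show ?thesis by simp
next
  case False
  define m where "m = (LEAST j. theta \<theta>0 j t \<noteq> 0)"
  have mA: "theta \<theta>0 m t \<noteq> 0" using False unfolding m_def by (metis (mono_tags) Collect_empty_eq LeastI)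
  have sub: "{j. theta \<theta>0 j t \<noteq> 0} \<subseteq> {m, Suc m}"
  proof
    fix k assume "k \<in> {j. theta \<theta>0 j t \<noteq> 0}"
    then have k: "theta \<theta>0 k t \<noteq> 0" by simp
    then have "m \<le> k" unfolding m_def by (rule Least_le)
    moreover have "m < k \<Longrightarrow> k \<le> m + 1" using theta_nz_close[OF h3 h4 mA k] .
    ultimately show "k \<in> {m, Suc m}" by force
  qed
  have "card {m, Suc m} \<le> 2" by simp
  then show ?thesis using sub by (meson card_mono finite.emptyI finite.insertI finite_subset le_trans)
qed

lemma sq_sum_ge:
  fixes f :: "'a \<Rightarrow> real"
  assumes "\<And>x. x \<in> S \<Longrightarrow> f x \<ge> 0"
  shows "(\<Sum>x\<in>S. (f x)^2) \<le> (sum f S)^2"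
  using assms
proof (induction S rule: infinite_finite_induct)
  case (insert a S)
  have "sum f S \<ge> 0" using insert by (simp add: sum_nonneg)
  moreover have "f a \<ge> 0" using insert by simp
  ultimately have "0 \<le> 2 * f a * sum f S" by simp
  then show ?case using insert by (simp add: power2_eq_square algebra_simps)
qed auto

lemma sq_sum_le:
  assumes h3: "\<And>t. \<bar>t\<bar> > 2 \<Longrightarrow> \<theta>0 t = 0"
    and h4: "\<And>t. \<bar>t\<bar> \<le> 1 \<Longrightarrow> \<theta>0 t = 1"
    and fin: "finite G"
  shows "(\<Sum>(j1,j2)\<in>G. phi \<theta>0 j1 j2 \<xi>)^2 \<le> 4 * (\<Sum>(j1,j2)\<in>G. (phi \<theta>0 j1 j2 \<xi>)^2)"
proof -
  define A where "A = {j. theta \<theta>0 j (fst \<xi>) \<noteq> 0}"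
  define B where "B = {j. theta \<theta>0 j (snd \<xi>) \<noteq> 0}"
  have fA: "finite A" "card A \<le> 2" using theta_nz_set[OF h3 h4] unfolding A_def by auto
  have fB: "finite B" "card B \<le> 2" using theta_nz_set[OF h3 h4] unfolding B_def by auto
  define S where "S = G \<inter> (A \<times> B)"
  have cS: "card S \<le> 4"
  proof -
    have "card S \<le> card (A \<times> B)" unfolding S_def using fA fB by (intro card_mono) auto
    also have "\<dots> = card A * card B" by (rule card_cartesian_product)
    also have "\<dots> \<le> 2 * 2" using fA fB by (intro mult_le_mono) auto
    finally show ?thesis by simp
  qed
  have z: "\<And>p. p \<in> G - S \<Longrightarrow> (\<lambda>(j1,j2). phi \<theta>0 j1 j2 \<xi>) p = 0"
    unfolding S_def A_def B_def phi_def by auto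
  have z2: "\<And>p. p \<in> G - S \<Longrightarrow> (\<lambda>(j1,j2). (phi \<theta>0 j1 j2 \<xi>)^2) p = 0"
    using z by auto
  have SG: "S \<subseteq> G" unfolding S_def by auto
  have e1: "(\<Sum>(j1,j2)\<in>G. phi \<theta>0 j1 j2 \<xi>) = (\<Sum>(j1,j2)\<in>S. phi \<theta>0 j1 j2 \<xi>)"
    by (rule sum.mono_neutral_right[OF fin SG]) (use z in blast)
  have e2: "(\<Sum>(j1,j2)\<in>G. (phi \<theta>0 j1 j2 \<xi>)^2) = (\<Sum>(j1,j2)\<in>S. (phi \<theta>0 j1 j2 \<xi>)^2)"
    by (rule sum.mono_neutral_right[OF fin SG]) (use z2 in blast)
  have "(\<Sum>(j1,j2)\<in>S. phi \<theta>0 j1 j2 \<xi>)^2 \<le> (\<Sum>p\<in>S. ((\<lambda>(j1,j2). phi \<theta>0 j1 j2 \<xi>) p)^2) * real (card S)"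
    by (rule sum_squared_le_sum_of_squares)
  also have "\<dots> \<le> (\<Sum>p\<in>S. ((\<lambda>(j1,j2). phi \<theta>0 j1 j2 \<xi>) p)^2) * 4"
    using cS by (intro mult_left_mono) (auto intro: sum_nonneg)
  also have "(\<Sum>p\<in>S. ((\<lambda>(j1,j2). phi \<theta>0 j1 j2 \<xi>) p)^2) = (\<Sum>(j1,j2)\<in>S. (phi \<theta>0 j1 j2 \<xi>)^2)"
    by (intro sum.cong) auto
  finally show ?thesis using e1 e2 by simp
qed

theorem lemma4:
  fixes \<theta>0 :: "real \<Rightarrow> real" and a1 a2 :: real
  assumes "schwartz \<theta>0"
    and "\<And>t. \<theta>0 t \<ge> 0"
    and "\<And>t. \<bar>t\<bar> > 2 \<Longrightarrow> \<theta>0 t = 0"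
    and "\<And>t. \<bar>t\<bar> \<le> 1 \<Longrightarrow> \<theta>0 t = 1"
    and "\<And>j t. j \<ge> 1 \<Longrightarrow> theta \<theta>0 j t \<ge> 0"
    and "admissible a1 a2"
  shows "\<exists>C>0. \<forall>j::nat. \<forall>F :: real \<times> real \<Rightarrow> complex. locally_L2 F \<longrightarrow>
           ennreal (1 / C) * (\<Sum>(j1, j2)\<in>Gamma a1 a2 j. L2sq (\<lambda>\<xi>. of_real (phi \<theta>0 j1 j2 \<xi>) * F \<xi>))
             \<le> L2sq (\<lambda>\<xi>. of_real (g_alpha \<theta>0 a1 a2 j \<xi>) * F \<xi>) \<and>
           L2sq (\<lambda>\<xi>. of_real (g_alpha \<theta>0 a1 a2 j \<xi>) * F \<xi>)
             \<le> ennreal C * (\<Sum>(j1, j2)\<in>Gamma a1 a2 j. L2sq (\<lambda>\<xi>. of_real (phi \<theta>0 j1 j2 \<xi>) * F \<xi>))"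
proof -
  note h3 = assms(3) and h4 = assms(4)
  have thnn: "\<And>j t. theta \<theta>0 j t \<ge> 0"
    using assms(2,5) by (metis One_nat_def Suc_leI neq0_conv theta_def)
  have phinn: "\<And>j1 j2 \<xi>. phi \<theta>0 j1 j2 \<xi> \<ge> 0" unfolding phi_def using thnn by simp
  have cont0: "continuous_on UNIV \<theta>0"
  proof -
    have "\<And>x. \<theta>0 differentiable (at x)" using assms(1) unfolding schwartz_def
      by (metis funpow_0)
    then show ?thesis by (simp add: continuous_at_imp_continuous_on differentiable_imp_continuous_within)
  qed
  have contth: "\<And>j. continuous_on UNIV (theta \<theta>0 j)"
  proof -
    fix j
    have "continuous_on UNIV (\<lambda>t. \<theta>0 (t / 2 ^ j) - \<theta>0 (t / 2 ^ (j - 1)))"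
      by (intro continuous_intros continuous_on_compose2[OF cont0]) auto
    then show "continuous_on UNIV (theta \<theta>0 j)"
      unfolding theta_def[abs_def] using cont0 by (cases "j = 0") auto
  qed
  have phim: "\<And>j1 j2. phi \<theta>0 j1 j2 \<in> borel_measurable lborel"
  proof -
    fix j1 j2
    have "continuous_on UNIV (phi \<theta>0 j1 j2)"
      unfolding phi_def[abs_def]
      by (intro continuous_intros continuous_on_compose2[OF contth]) auto
    then show "phi \<theta>0 j1 j2 \<in> borel_measurable lborel"
      using borel_measurable_continuous_onI by simp
  qed
  show ?thesis
  proof (intro exI[of _ 4] conjI allI impI)
    fix j F assume lF: "locally_L2 F"
    have Fm: "F \<in> borel_measurable lborel" using lF unfolding locally_L2_def by simp
    have phim': "\<And>j1 j2. phi \<theta>0 j1 j2 \<in> borel_measurable borel" using phim by simp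
    have Fm': "F \<in> borel_measurable borel" using Fm by simp
    note [measurable] = phim' Fm'
    let ?G = "Gamma a1 a2 j"
    let ?S = "\<Sum>(j1, j2)\<in>?G. L2sq (\<lambda>\<xi>. of_real (phi \<theta>0 j1 j2 \<xi>) * F \<xi>)"
    let ?g = "L2sq (\<lambda>\<xi>. of_real (g_alpha \<theta>0 a1 a2 j \<xi>) * F \<xi>)"
    have Sint: "?S = (\<integral>\<^sup>+ \<xi>. ennreal ((\<Sum>(j1,j2)\<in>?G. (phi \<theta>0 j1 j2 \<xi>)^2) * (cmod (F \<xi>))^2) \<partial>lborel)"
    proof -
      have "?S = (\<Sum>p\<in>?G. \<integral>\<^sup>+ \<xi>. ennreal (((\<lambda>(j1,j2). phi \<theta>0 j1 j2 \<xi>) p)^2 * (cmod (F \<xi>))^2) \<partial>lborel)"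
        unfolding L2sq_def
        by (intro sum.cong refl) (auto simp: norm_mult power_mult_distrib)
      also have "\<dots> = (\<integral>\<^sup>+ \<xi>. (\<Sum>p\<in>?G. ennreal (((\<lambda>(j1,j2). phi \<theta>0 j1 j2 \<xi>) p)^2 * (cmod (F \<xi>))^2)) \<partial>lborel)"
        by (rule nn_integral_sum[symmetric]) (auto simp: split_beta)
      also have "\<dots> = (\<integral>\<^sup>+ \<xi>. ennreal ((\<Sum>(j1,j2)\<in>?G. (phi \<theta>0 j1 j2 \<xi>)^2) * (cmod (F \<xi>))^2) \<partial>lborel)"
        by (intro nn_integral_cong) (simp add: sum_distrib_right case_prod_unfold)
      finally show ?thesis .
    qed
    have gint: "?g = (\<integral>\<^sup>+ \<xi>. ennreal ((\<Sum>(j1,j2)\<in>?G. phi \<theta>0 j1 j2 \<xi>)^2 * (cmod (F \<xi>))^2) \<partial>lborel)"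
      unfolding L2sq_def g_alpha_def by (simp add: norm_mult power_mult_distrib del: of_real_sum)
    have lowpt: "\<And>\<xi>. (\<Sum>(j1,j2)\<in>?G. (phi \<theta>0 j1 j2 \<xi>)^2) \<le> (\<Sum>(j1,j2)\<in>?G. phi \<theta>0 j1 j2 \<xi>)^2"
    proof -
      fix \<xi>
      have "(\<Sum>p\<in>?G. ((\<lambda>(j1,j2). phi \<theta>0 j1 j2 \<xi>) p)^2) \<le> (\<Sum>p\<in>?G. (\<lambda>(j1,j2). phi \<theta>0 j1 j2 \<xi>) p)^2"
        by (rule sq_sum_ge) (auto simp: phinn)
      then show "?thesis \<xi>" by (simp add: case_prod_unfold)
    qed
    have "?S \<le> ?g" unfolding Sint gint
      by (intro nn_integral_mono ennreal_leI mult_right_mono lowpt) auto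
    moreover have "ennreal (1/4) * ?S \<le> ?S"
    proof -
      have "ennreal (1/4) * ?S \<le> 1 * ?S" by (intro mult_right_mono) auto
      then show ?thesis by simp
    qed
    ultimately show "ennreal (1/4) * ?S \<le> ?g" by (rule order_trans[rotated])
    show "?g \<le> ennreal 4 * ?S"
    proof (cases "finite ?G")
      case False
      then show ?thesis unfolding gint by simp
    next
      case True
      have "?g \<le> (\<integral>\<^sup>+ \<xi>. ennreal 4 * ennreal ((\<Sum>(j1,j2)\<in>?G. (phi \<theta>0 j1 j2 \<xi>)^2) * (cmod (F \<xi>))^2) \<partial>lborel)"
        unfolding gint
      proof (intro nn_integral_mono)
        fix \<xi>
        have m1: "(\<Sum>(j1,j2)\<in>?G. phi \<theta>0 j1 j2 \<xi>)^2 * (cmod (F \<xi>))^2 \<le> (4 * (\<Sum>(j1,j2)\<in>?G. (phi \<theta>0 j1 j2 \<xi>)^2)) * (cmod (F \<xi>))^2"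
          by (intro mult_right_mono sq_sum_le[OF h3 h4 True]) auto
        have m2: "(\<Sum>(j1,j2)\<in>?G. (phi \<theta>0 j1 j2 \<xi>)^2) \<ge> 0" by (intro sum_nonneg) auto
        show "ennreal ((\<Sum>(j1,j2)\<in>?G. phi \<theta>0 j1 j2 \<xi>)^2 * (cmod (F \<xi>))^2) \<le> ennreal 4 * ennreal ((\<Sum>(j1,j2)\<in>?G. (phi \<theta>0 j1 j2 \<xi>)^2) * (cmod (F \<xi>))^2)"
        proof -
          let ?X = "(\<Sum>(j1,j2)\<in>?G. (phi \<theta>0 j1 j2 \<xi>)^2) * (cmod (F \<xi>))^2"
          have X0: "?X \<ge> 0" using m2 by simp
          have "ennreal ((\<Sum>(j1,j2)\<in>?G. phi \<theta>0 j1 j2 \<xi>)^2 * (cmod (F \<xi>))^2) \<le> ennreal (4 * ?X)"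
            using m1 by (intro ennreal_leI) (simp add: mult.assoc)
          also have "ennreal (4 * ?X) = ennreal 4 * ennreal ?X" using X0 by (rule ennreal_mult[rotated]) simp
          finally show ?thesis .
        qed
      qed
      also have "\<dots> = ennreal 4 * ?S" unfolding Sint
        by (rule nn_integral_cmult) (auto simp: split_beta)
      finally show ?thesis .
    qed
  qed simp
qed

end
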